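(* There is a constant $C>0$ such that for all $d\ge1$, $$\pi_d(p_1p_2\cdots p_{d+1})=O(C^d).$$
   Context: $p_i$ denotes the $i$-th prime. For a real $x$, $\pi_d(x)$ is the number of squarefree positive integers $m\le x$ having exactly $d$ prime factors. *)

theory Defs
  imports "HOL-Computational_Algebra.Computational_Algebra"
begin

text \<open>The i-th prime, 1-indexed: nth_prime 1 = 2, nth_prime 2 = 3, ...\<close>
definition nth_prime :: "nat \<Rightarrow> nat" where
  "nth_prime i = enumerate {p. prime p} (i - 1)"

definition pi_d :: "nat \<Rightarrow> real \<Rightarrow> nat" where
  "pi_d d x = card {m::nat. 0 < m \<and> real m \<le> x \<and> squarefree m \<and> card (prime_factors m) = d}"

end

theory Submission
  imports Defs "HOL-Library.Infinite_Set" "HOL-Real_Asymp.Real_Asymp"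
begin

lemma Suc_div_eq:
  fixes n q :: nat assumes "0 < q"
  shows "Suc n div q = n div q + (if q dvd Suc n then 1 else 0)"
  using assms by (auto simp: div_Suc dvd_eq_mod_eq_0)

lemma mult_le_self:
  fixes p n :: nat assumes "prime p" "0 < n"
  shows "multiplicity p n \<le> n"
proof -
  have "p ^ multiplicity p n dvd n" by (rule multiplicity_dvd)
  hence "p ^ multiplicity p n \<le> n" using assms by (intro dvd_imp_le) auto
  moreover have "multiplicity p n < 2 ^ multiplicity p n" by (rule less_exp)
  moreover have "2 ^ multiplicity p n \<le> p ^ multiplicity p n"
    using prime_ge_2_nat[OF assms(1)] by (intro power_mono) auto
  ultimately show ?thesis by linarith
qed

lemma card_dvd_powers:
  fixes p x M :: nat assumes "prime p" "0 < x" "x \<le> M"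
  shows "card {i\<in>{1..M}. p ^ i dvd x} = multiplicity p x"
proof -
  have iff: "p ^ i dvd x \<longleftrightarrow> i \<le> multiplicity p x" for i
    using power_dvd_iff_le_multiplicity[of x p i] assms(1,2) prime_gt_1_nat[OF assms(1)] by simp
  have "{i\<in>{1..M}. p ^ i dvd x} = {1..multiplicity p x}"
    using mult_le_self[OF assms(1,2)] assms(3) unfolding iff by auto
  thus ?thesis by simp
qed

lemma legendre:
  fixes p :: nat assumes "prime p"
  shows "n \<le> M \<Longrightarrow> multiplicity p (fact n) = (\<Sum>i\<in>{1..M}. n div p ^ i)"
proof (induction n)
  case 0
  then show ?case by simp
next
  case (Suc n)
  have pos: "\<And>i. 0 < p ^ i" using prime_gt_0_nat[OF assms] by simp
  have "multiplicity p (fact (Suc n) :: nat) = multiplicity p (Suc n * fact n)"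
    by (simp add: fact_Suc)
  also have "\<dots> = multiplicity p (Suc n) + multiplicity p (fact n :: nat)"
    using assms by (intro prime_elem_multiplicity_mult_distrib) auto
  also have "multiplicity p (fact n :: nat) = (\<Sum>i\<in>{1..M}. n div p ^ i)"
    using Suc by simp
  also have "multiplicity p (Suc n) = card {i\<in>{1..M}. p ^ i dvd Suc n}"
    using card_dvd_powers[OF assms, of "Suc n" M] Suc.prems by simp
  also have "\<dots> = (\<Sum>i\<in>{1..M}. (if p ^ i dvd Suc n then 1 else 0))"
    by (simp add: sum.If_cases) (auto intro!: arg_cong[where f=card])
  also have "\<dots> + (\<Sum>i\<in>{1..M}. n div p ^ i) = (\<Sum>i\<in>{1..M}. Suc n div p ^ i)"
    by (subst sum.distrib[symmetric]) (intro sum.cong refl, simp add: Suc_div_eq[OF pos])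
  finally show ?case .
qed

lemma binom_prime_power_le:
  fixes p n :: nat assumes "prime p" "0 < n"
  shows "p ^ multiplicity p ((2*n) choose n) \<le> 2 * n"
proof (rule ccontr)
  assume A: "\<not> ?thesis"
  define L where "L = multiplicity p ((2*n) choose n)"
  have pos: "\<And>i. 0 < p ^ i" using prime_gt_0_nat[OF assms(1)] by simp
  have "fact n * fact (2*n - n) * ((2*n) choose n) = (fact (2*n) :: nat)"
    by (rule binomial_fact_lemma) simp
  hence eq: "((2*n) choose n) * (fact n * fact n) = (fact (2*n) :: nat)" by (simp add: mult_ac)
  have nz: "((2*n) choose n) \<noteq> 0" "(fact n :: nat) \<noteq> 0" by auto
  have "multiplicity p (fact (2*n) :: nat) = L + (multiplicity p (fact n :: nat) + multiplicity p (fact n :: nat))"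
    unfolding eq[symmetric] L_def using assms nz
    by (simp add: prime_elem_multiplicity_mult_distrib)
  hence "(\<Sum>i\<in>{1..2*n}. (2*n) div p ^ i) = L + 2 * (\<Sum>i\<in>{1..2*n}. n div p ^ i)"
    using legendre[OF assms(1), of "2*n" "2*n"] legendre[OF assms(1), of n "2*n"] by simp
  also have "\<dots> = L + (\<Sum>i\<in>{1..2*n}. 2 * (n div p ^ i))" by (simp add: sum_distrib_left)
  finally have Leq: "L + (\<Sum>i\<in>{1..2*n}. 2 * (n div p ^ i)) = (\<Sum>i\<in>{1..2*n}. (2*n) div p ^ i)" by simp
  have trm: "(2*n) div q \<le> 2 * (n div q) + (if q \<le> 2*n then 1 else 0)" if "0 < q" for q :: nat
  proof (cases "q \<le> 2*n")
    case True
    define a where "a = n div q"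
    define r where "r = n mod q"
    have "n = q * a + r" unfolding a_def r_def by simp
    moreover have "r < q" using that unfolding r_def by simp
    ultimately have "2*n < (2 * a + 2) * q" by (simp add: algebra_simps) 
    hence "(2*n) div q < 2 * (n div q) + 2" unfolding a_def by (rule less_mult_imp_div_less)
    thus ?thesis using True by simp
  next
    case False then show ?thesis by simp
  qed
  have "(\<Sum>i\<in>{1..2*n}. (2*n) div p ^ i) \<le> (\<Sum>i\<in>{1..2*n}. 2 * (n div p ^ i) + (if p ^ i \<le> 2*n then 1 else 0))"
    by (intro sum_mono trm pos)
  also have "\<dots> = (\<Sum>i\<in>{1..2*n}. 2 * (n div p ^ i)) + card {i\<in>{1..2*n}. p ^ i \<le> 2*n}"
    by (simp add: sum.distrib sum.If_cases) (auto intro!: arg_cong[where f=card])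
  finally have "L \<le> card {i\<in>{1..2*n}. p ^ i \<le> 2*n}" using Leq by linarith
  also have "{i\<in>{1..2*n}. p ^ i \<le> 2*n} \<subseteq> {1..<L}"
  proof
    fix i assume "i \<in> {i\<in>{1..2*n}. p ^ i \<le> 2*n}"
    hence "p ^ i < p ^ L" "1 \<le> i" using A L_def by auto
    hence "i < L" using prime_gt_1_nat[OF assms(1)] by (simp add: power_strict_increasing_iff)
    thus "i \<in> {1..<L}" using \<open>1 \<le> i\<close> by simp
  qed
  hence "card {i\<in>{1..2*n}. p ^ i \<le> 2*n} \<le> card {1..<L}" by (intro card_mono) auto
  finally have "L \<le> L - 1" by simp
  moreover have "L \<noteq> 0" using A assms unfolding L_def by (cases "multiplicity p (2*n choose n)") auto
  ultimately show False by simp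
qed

lemma binom_le_pow_pi:
  fixes n :: nat assumes "0 < n"
  shows "((2*n) choose n) \<le> (2*n) ^ card {p. prime p \<and> p \<le> 2*n}"
proof -
  define b where "b = (2*n) choose n"
  have bpos: "b > 0" unfolding b_def by simp
  have "b = (\<Prod>p\<in>prime_factors b. p ^ multiplicity p b)"
    using prime_factorization_nat[OF bpos] .
  also have "\<dots> \<le> (\<Prod>p\<in>prime_factors b. 2*n)"
    by (intro prod_mono conjI) (auto simp: b_def intro!: binom_prime_power_le assms)
  also have "\<dots> = (2*n) ^ card (prime_factors b)" by simp
  also have "\<dots> \<le> (2*n) ^ card {p. prime p \<and> p \<le> 2*n}"
  proof (intro power_increasing card_mono)
    show "finite {p. prime p \<and> p \<le> 2*n}" by simp
    show "prime_factors b \<subseteq> {p. prime p \<and> p \<le> 2*n}"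
    proof
      fix p assume p: "p \<in> prime_factors b"
      hence pr: "prime p" and "p dvd b" by auto
      have "fact n * fact (2*n - n) * b = (fact (2*n) :: nat)"
        unfolding b_def by (rule binomial_fact_lemma) simp
      hence "b dvd fact (2*n)" by (metis dvd_triv_right)
      hence "p dvd fact (2*n)" using \<open>p dvd b\<close> by (rule dvd_trans[rotated])
      thus "p \<in> {p. prime p \<and> p \<le> 2*n}" using pr prime_dvd_fact_iff by auto
    qed
  qed (use assms in auto)
  finally show ?thesis unfolding b_def .
qed

lemma four_pow_le:
  fixes n :: nat assumes "0 < n"
  shows "4 ^ n \<le> (2*n) ^ (card {p. prime p \<and> p \<le> 2*n} + 1)"
proof -
  have "real (4 ^ n) \<le> real (((2*n) choose n) * (2*n))"
    using central_binomial_lower_bound[OF assms] assms by (simp add: field_simps)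
  hence "4 ^ n \<le> ((2*n) choose n) * (2*n)" by (simp only: of_nat_le_iff)
  also have "\<dots> \<le> (2*n) ^ card {p. prime p \<and> p \<le> 2*n} * (2*n)"
    by (intro mult_right_mono binom_le_pow_pi assms) simp
  finally show ?thesis by (simp only: power_Suc2 Suc_eq_plus1[symmetric])
qed


lemma primes_le_enum:
  "{p. prime p \<and> p \<le> enumerate {p::nat. prime p} d} = enumerate {p. prime p} ` {..d}"
proof -
  have inf: "infinite {p::nat. prime p}" by (rule primes_infinite)
  show ?thesis
  proof
    show "enumerate {p. prime p} ` {..d} \<subseteq> {p. prime p \<and> p \<le> enumerate {p::nat. prime p} d}"
      using enumerate_in_set[OF inf] enumerate_mono_le_iff[OF inf] by auto
    show "{p. prime p \<and> p \<le> enumerate {p::nat. prime p} d} \<subseteq> enumerate {p. prime p} ` {..d}"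
    proof
      fix p assume "p \<in> {p. prime p \<and> p \<le> enumerate {p::nat. prime p} d}"
      then obtain i where "p = enumerate {p. prime p} i" and "p \<le> enumerate {p::nat. prime p} d"
        using enumerate_Ex[OF inf] by auto
      thus "p \<in> enumerate {p. prime p} ` {..d}" using enumerate_mono_le_iff[OF inf] by auto
    qed
  qed
qed

lemma card_primes_le_enum:
  "card {p. prime p \<and> p \<le> enumerate {p::nat. prime p} d} = Suc d"
proof -
  have inf: "infinite {p::nat. prime p}" by (rule primes_infinite)
  have "inj_on (enumerate {p::nat. prime p}) {..d}"
    using enumerate_mono[OF _ inf] by (intro inj_onI) (metis linorder_neqE_nat less_irrefl)
  thus ?thesis unfolding primes_le_enum by (simp add: card_image)
qed

lemma prod_primes_le_enum:
  "(\<Prod>i=1..d+1. enumerate {p::nat. prime p} (i - 1)) = \<Prod>{p. prime p \<and> p \<le> enumerate {p::nat. prime p} d}"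
proof -
  have inf: "infinite {p::nat. prime p}" by (rule primes_infinite)
  have inj: "inj_on (enumerate {p::nat. prime p}) {..d}"
    using enumerate_mono[OF _ inf] by (intro inj_onI) (metis linorder_neqE_nat less_irrefl)
  have "(\<Prod>i=1..d+1. enumerate {p::nat. prime p} (i - 1)) = (\<Prod>i\<in>{..d}. enumerate {p::nat. prime p} i)"
    by (rule prod.reindex_bij_witness[where i="\<lambda>i. i+1" and j="\<lambda>i. i - 1"]) auto
  also have "\<dots> = \<Prod>(enumerate {p::nat. prime p} ` {..d})" using prod.reindex[OF inj, of id] by simp
  finally show ?thesis unfolding primes_le_enum .
qed

lemma bern2:
  fixes s t :: real assumes "0 \<le> s" "0 \<le> t"
  shows "s ^ Suc n + real (Suc n) * t * s ^ n \<le> (s + t) ^ Suc n"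
proof (induction n)
  case 0 then show ?case by simp
next
  case (Suc n)
  have "s ^ Suc (Suc n) + real (Suc (Suc n)) * t * s ^ Suc n
        \<le> (s + t) * (s ^ Suc n + real (Suc n) * t * s ^ n)"
    using assms by (simp add: algebra_simps)
  also have "\<dots> \<le> (s + t) * (s + t) ^ Suc n"
    using Suc assms by (intro mult_left_mono) auto
  finally show ?case by simp
qed

lemma subsets_insert_Suc:
  assumes "finite I" "a \<notin> I"
  shows "{U. U \<subseteq> insert a I \<and> card U = Suc j} =
         {U. U \<subseteq> I \<and> card U = Suc j} \<union> insert a ` {U. U \<subseteq> I \<and> card U = j}"
proof (intro equalityI subsetI)
  fix U assume U: "U \<in> {U. U \<subseteq> insert a I \<and> card U = Suc j}"
  show "U \<in> {U. U \<subseteq> I \<and> card U = Suc j} \<union> insert a ` {U. U \<subseteq> I \<and> card U = j}"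
  proof (cases "a \<in> U")
    case True
    have fin: "finite U" using U assms finite_subset by auto
    have "U = insert a (U - {a})" using True by auto
    moreover have "card (U - {a}) = j" using U True fin by simp
    moreover have "U - {a} \<subseteq> I" using U by auto
    ultimately show ?thesis by blast
  next
    case False
    then show ?thesis using U by auto
  qed
next
  fix U assume "U \<in> {U. U \<subseteq> I \<and> card U = Suc j} \<union> insert a ` {U. U \<subseteq> I \<and> card U = j}"
  then show "U \<in> {U. U \<subseteq> insert a I \<and> card U = Suc j}"
  proof
    assume "U \<in> insert a ` {U. U \<subseteq> I \<and> card U = j}"
    then obtain V where "V \<subseteq> I" "card V = j" "U = insert a V" by auto
    moreover have "finite V" using \<open>V \<subseteq> I\<close> assms finite_subset by auto
    moreover have "a \<notin> V" using \<open>V \<subseteq> I\<close> assms by auto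
    ultimately show ?thesis using assms by auto
  qed auto
qed

lemma esym_bound:
  fixes w :: "'a \<Rightarrow> real"
  assumes "finite I" "\<And>x. x \<in> I \<Longrightarrow> 0 \<le> w x"
  shows "fact k * (\<Sum>U\<in>{U. U \<subseteq> I \<and> card U = k}. \<Prod>u\<in>U. w u) \<le> (\<Sum>x\<in>I. w x) ^ k"
  using assms
proof (induction I arbitrary: k rule: finite_induct)
  case empty
  show ?case
  proof (cases k)
    case 0
    have e: "{U. U \<subseteq> {} \<and> card U = k} = {{}}" using 0 by auto
    show ?thesis by (simp only: e) (simp add: 0)
  next
    case (Suc j)
    have e: "{U. U \<subseteq> {} \<and> card U = k} = {}" using Suc by auto
    show ?thesis by (simp only: e) (simp add: Suc)
  qed
next
  case (insert a I)
  have w0: "\<And>x. x \<in> I \<Longrightarrow> 0 \<le> w x" "0 \<le> w a" using insert.prems by auto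
  define s where "s = (\<Sum>x\<in>I. w x)"
  have s0: "0 \<le> s" unfolding s_def using w0 by (intro sum_nonneg) auto
  show ?case
  proof (cases k)
    case 0
    have "{U. U \<subseteq> insert a I \<and> card U = 0} = {{}}"
    proof (intro equalityI subsetI)
      fix U assume "U \<in> {U. U \<subseteq> insert a I \<and> card U = 0}"
      hence "U \<subseteq> insert a I" "card U = 0" by auto
      moreover have "finite U"
        using \<open>U \<subseteq> insert a I\<close> insert.hyps(1) finite_insert finite_subset by metis
      ultimately show "U \<in> {{}}" by simp
    qed auto
    then show ?thesis using 0 by simp
  next
    case (Suc j)
    define E where "E = (\<lambda>k. (\<Sum>U\<in>{U. U \<subseteq> I \<and> card U = k}. \<Prod>u\<in>U. w u))"
    have finF: "finite {U. U \<subseteq> I \<and> card U = k}" for k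
      by (rule finite_subset[of _ "Pow I"]) (use insert.hyps in auto)
    have inj: "inj_on (insert a) {U. U \<subseteq> I \<and> card U = j}"
    proof (rule inj_onI)
      fix U V assume U: "U \<in> {U. U \<subseteq> I \<and> card U = j}" and V: "V \<in> {U. U \<subseteq> I \<and> card U = j}"
        and e: "insert a U = insert a V"
      have "a \<notin> U" "a \<notin> V" using U V insert.hyps by auto
      thus "U = V" using e insert_ident by metis
    qed
    have disj: "{U. U \<subseteq> I \<and> card U = Suc j} \<inter> insert a ` {U. U \<subseteq> I \<and> card U = j} = {}"
      using insert.hyps by auto
    have "(\<Sum>U\<in>{U. U \<subseteq> insert a I \<and> card U = k}. \<Prod>u\<in>U. w u)
        = E (Suc j) + (\<Sum>U\<in>insert a ` {U. U \<subseteq> I \<and> card U = j}. \<Prod>u\<in>U. w u)"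
      unfolding Suc subsets_insert_Suc[OF insert.hyps] E_def
      by (rule sum.union_disjoint) (use finF disj in auto)
    also have "(\<Sum>U\<in>insert a ` {U. U \<subseteq> I \<and> card U = j}. \<Prod>u\<in>U. w u)
        = (\<Sum>U\<in>{U. U \<subseteq> I \<and> card U = j}. \<Prod>u\<in>insert a U. w u)"
      by (rule sum.reindex[OF inj, unfolded comp_def])
    also have "\<dots> = (\<Sum>U\<in>{U. U \<subseteq> I \<and> card U = j}. w a * (\<Prod>u\<in>U. w u))"
    proof (intro sum.cong refl)
      fix U assume "U \<in> {U. U \<subseteq> I \<and> card U = j}"
      hence "U \<subseteq> I" by simp
      hence "finite U" "a \<notin> U" using insert.hyps by (simp add: finite_subset, blast)
      thus "(\<Prod>u\<in>insert a U. w u) = w a * (\<Prod>u\<in>U. w u)" by simp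
    qed
    also have "\<dots> = w a * E j" unfolding E_def by (simp add: sum_distrib_left)
    finally have eq: "(\<Sum>U\<in>{U. U \<subseteq> insert a I \<and> card U = k}. \<Prod>u\<in>U. w u) = E (Suc j) + w a * E j" .
    have IH1: "fact (Suc j) * E (Suc j) \<le> s ^ Suc j" unfolding E_def s_def by (rule insert.IH, rule w0(1))
    have IH2: "fact j * E j \<le> s ^ j" unfolding E_def s_def by (rule insert.IH, rule w0(1))
    have "fact k * (E (Suc j) + w a * E j) = fact (Suc j) * E (Suc j) + real (Suc j) * w a * (fact j * E j)"
      unfolding Suc by (simp add: algebra_simps)
    also have "\<dots> \<le> s ^ Suc j + real (Suc j) * w a * s ^ j"
      using w0 by (intro add_mono[OF IH1] mult_left_mono[OF IH2]) simp
    also have "\<dots> \<le> (s + w a) ^ Suc j" by (rule bern2[OF s0 w0(2)])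
    also have "s + w a = (\<Sum>x\<in>insert a I. w x)" unfolding s_def using insert.hyps by simp
    finally have fin: "fact k * (E (Suc j) + w a * E j) \<le> (\<Sum>x\<in>insert a I. w x) ^ k"
      unfolding Suc .
    show ?thesis by (subst eq) (rule fin)
  qed
qed

lemma tail_bound:
  fixes N M s :: nat assumes "1 \<le> N" "1 \<le> s"
  shows "(\<Sum>n\<in>{N<..M}. 1 / real n ^ Suc s) \<le> 1 / (real s * real N ^ s)"
proof (cases "N \<le> M")
  case False
  then show ?thesis by simp
next
  case True
  have "(\<Sum>n\<in>{N<..M}. 1 / real n ^ Suc s) \<le> (1 / real N ^ s - 1 / real M ^ s) / real s"
    using True
  proof (induction M rule: dec_induct)
    case base then show ?case by simp
  next
    case (step M)
    have M1: "1 \<le> M" using step assms by simp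
    have key: "1 / real (Suc M) ^ Suc s \<le> (1 / real M ^ s - 1 / real (Suc M) ^ s) / real s"
    proof -
      have b: "real M ^ Suc s + real (Suc s) * 1 * real M ^ s \<le> (real M + 1) ^ Suc s"
        by (rule bern2) auto
      have pM: "0 < real M" using M1 by simp
      define A where "A = real M ^ s"
      define B where "B = (real M + 1) ^ s"
      have A0: "0 < A" "0 < B" unfolding A_def B_def using pM by auto
      have "real s * A \<le> (real M + 1) * (B - A)"
        using b unfolding A_def B_def by (simp add: algebra_simps)
      hence i1: "real s * A / ((real M + 1) * A * B) \<le> (real M + 1) * (B - A) / ((real M + 1) * A * B)"
        using A0 pM by (intro divide_right_mono) auto
      have e1: "real (Suc M) ^ Suc s = (real M + 1) * B" unfolding B_def by (simp add: add.commute)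
      have e2: "(real M + 1) * A * B = A * ((real M + 1) * B)" by (simp add: algebra_simps)
      have e3: "real s * A / ((real M + 1) * A * B) = real s / ((real M + 1) * B)" unfolding e2 using A0 by simp
      have e4: "(real M + 1) * (B - A) / ((real M + 1) * A * B) = 1 / real M ^ s - 1 / real (Suc M) ^ s"
      proof -
        have "(real M + 1) * (B - A) / ((real M + 1) * A * B) = (B - A) / (A * B)"
          using pM by (simp add: mult.assoc)
        also have "\<dots> = 1 / A - 1 / B" using A0 by (simp add: field_simps)
        finally show ?thesis unfolding A_def B_def by (simp add: add.commute)
      qed
      have "real s / real (Suc M) ^ Suc s \<le> 1 / real M ^ s - 1 / real (Suc M) ^ s"
        using i1 unfolding e3 e4 e1 .
      thus ?thesis using assms by (simp add: field_simps)
    qed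
    have "{N<..Suc M} = insert (Suc M) {N<..M}" using step by auto
    hence "(\<Sum>n\<in>{N<..Suc M}. 1 / real n ^ Suc s) = 1 / real (Suc M) ^ Suc s + (\<Sum>n\<in>{N<..M}. 1 / real n ^ Suc s)"
      by simp
    also have "\<dots> \<le> (1 / real M ^ s - 1 / real (Suc M) ^ s) / real s + (1 / real N ^ s - 1 / real M ^ s) / real s"
      using key step.IH by linarith
    also have "\<dots> = (1 / real N ^ s - 1 / real (Suc M) ^ s) / real s" by (simp add: diff_divide_distrib)
    finally show ?case .
  qed
  also have "\<dots> \<le> (1 / real N ^ s) / real s"
    using assms by (intro divide_right_mono) auto
  finally show ?thesis by (simp add: mult.commute)
qed

lemma pow_fact_le_exp:
  fixes x :: real assumes "0 \<le> x"
  shows "x ^ k / fact k \<le> exp x"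
proof -
  have sm: "(\<lambda>m. x ^ m / fact m) sums exp x"
    using exp_converges[of x] by (simp add: scaleR_conv_of_real divide_inverse mult.commute)
  have "x ^ k / fact k \<le> (\<Sum>m<Suc k. x ^ m / fact m)"
    using assms by (simp add: sum_nonneg)
  also have "(\<Sum>m<Suc k. x ^ m / fact m) \<le> (\<Sum>m. x ^ m / fact m)"
    using assms sm by (intro sum_le_suminf) (auto simp: sums_iff)
  also have "\<dots> = exp x" using sm by (simp add: sums_iff)
  finally show ?thesis .
qed

lemma F_bound:
  fixes N s k :: nat assumes N: "2 \<le> N" and s: "1 \<le> s"
  shows "real (card {U. U \<subseteq> {N<..N^(k+1)} \<and> card U = k \<and> \<Prod>U \<le> N^(k+1)})
          \<le> real N ^ Suc s * exp (real N / real s)"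
proof -
  define I where "I = {N<..N^(k+1)}"
  define F where "F = {U. U \<subseteq> I \<and> card U = k \<and> \<Prod>U \<le> N^(k+1)}"
  define G where "G = {U. U \<subseteq> I \<and> card U = k}"
  define w where "w = (\<lambda>n::nat. 1 / real n ^ Suc s)"
  define c where "c = real N ^ ((k+1) * Suc s)"
  have finI: "finite I" unfolding I_def by simp
  have finG: "finite G" unfolding G_def by (rule finite_subset[of _ "Pow I"]) (use finI in auto)
  have FG: "F \<subseteq> G" unfolding F_def G_def by auto
  have w0: "\<And>x. 0 \<le> w x" unfolding w_def by simp
  have c0: "0 \<le> c" unfolding c_def by simp
  have one: "1 \<le> c * (\<Prod>u\<in>U. w u)" if U: "U \<in> F" for U
  proof -
    have UI: "U \<subseteq> I" and Up: "\<Prod>U \<le> N^(k+1)" using U unfolding F_def by auto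
    have finU: "finite U" using UI finI finite_subset by auto
    have pos: "\<And>u. u \<in> U \<Longrightarrow> 0 < u" using UI unfolding I_def by auto
    have P0: "0 < \<Prod>U" using pos finU by (simp add: prod_pos)
    have "(\<Prod>u\<in>U. w u) = 1 / (\<Prod>u\<in>U. real u) ^ Suc s"
      unfolding w_def by (simp add: prod_dividef prod_power_distrib del: power_Suc)
    also have "(\<Prod>u\<in>U. real u) = real (\<Prod>U)" by simp
    finally have eq: "(\<Prod>u\<in>U. w u) = 1 / real (\<Prod>U) ^ Suc s" .
    have "real (\<Prod>U) ^ Suc s \<le> real (N^(k+1)) ^ Suc s"
    proof (rule power_mono)
      show "real (\<Prod>U) \<le> real (N^(k+1))" using Up by (simp only: of_nat_le_iff)
      show "0 \<le> real (\<Prod>U)" by (rule of_nat_0_le_iff)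
    qed
    also have "\<dots> = c" unfolding c_def by (simp only: of_nat_power power_mult)
    finally have "real (\<Prod>U) ^ Suc s \<le> c" .
    moreover have Q: "0 < real (\<Prod>U) ^ Suc s" using P0 by (simp del: of_nat_prod)
    ultimately have "1 \<le> c / real (\<Prod>U) ^ Suc s" by (simp only: le_divide_eq_1_pos)
    thus ?thesis unfolding eq by simp
  qed
  have "real (card F) = (\<Sum>U\<in>F. 1)" by simp
  also have "\<dots> \<le> (\<Sum>U\<in>F. c * (\<Prod>u\<in>U. w u))" by (intro sum_mono one)
  also have "\<dots> \<le> (\<Sum>U\<in>G. c * (\<Prod>u\<in>U. w u))"
    using FG finG w0 c0 by (intro sum_mono2) (auto intro!: mult_nonneg_nonneg prod_nonneg)
  also have "\<dots> = c * (\<Sum>U\<in>G. (\<Prod>u\<in>U. w u))" by (simp add: sum_distrib_left)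
  also have "\<dots> \<le> c * ((\<Sum>x\<in>I. w x) ^ k / fact k)"
    using esym_bound[OF finI, of w k] w0 c0 unfolding G_def
    by (intro mult_left_mono) (simp_all add: field_simps)
  also have "\<dots> \<le> c * ((1 / (real s * real N ^ s)) ^ k / fact k)"
    using tail_bound[of N s "N^(k+1)"] N s c0 unfolding I_def w_def
    by (intro mult_left_mono divide_right_mono power_mono sum_nonneg) auto
  also have "c * ((1 / (real s * real N ^ s)) ^ k / fact k) = real N ^ Suc s * ((real N / real s) ^ k / fact k)"
    using N s unfolding c_def by (simp add: field_simps power_mult_distrib power_add power_mult algebra_simps) (metis power_mult mult.commute)
  also have "\<dots> \<le> real N ^ Suc s * exp (real N / real s)"
    by (intro mult_left_mono pow_fact_le_exp) auto
  finally show ?thesis unfolding F_def I_def .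
qed

lemma squarefree_prod_pf:
  fixes m :: nat assumes "0 < m" "squarefree m"
  shows "m = \<Prod>(prime_factors m)"
proof -
  have "m = (\<Prod>p\<in>prime_factors m. p ^ multiplicity p m)" by (rule prime_factorization_nat[OF assms(1)])
  also have "\<dots> = (\<Prod>p\<in>prime_factors m. p)"
    using squarefree_factorial_semiring'[of m] assms by (intro prod.cong refl) simp
  finally show ?thesis by simp
qed

lemma main_count:
  fixes N d s :: nat and T :: "nat set"
  assumes T: "T = {p. prime p \<and> p \<le> N}" and cT: "card T = Suc d" and N: "2 \<le> N" and s: "1 \<le> s"
  shows "real (card {m::nat. 0 < m \<and> real m \<le> real (\<Prod>T) \<and> squarefree m \<and> card (prime_factors m) = d})
         \<le> 2 ^ Suc d * (real N ^ Suc s * exp (real N / real s))"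
proof -
  define X where "X = {m::nat. 0 < m \<and> real m \<le> real (\<Prod>T) \<and> squarefree m \<and> card (prime_factors m) = d}"
  define Fam where "Fam = (\<lambda>k. {U. U \<subseteq> {N<..N^(k+1)} \<and> card U = k \<and> \<Prod>U \<le> N^(k+1)})"
  define h where "h = (\<lambda>m::nat. (T - prime_factors m, prime_factors m - T))"
  define B where "B = real N ^ Suc s * exp (real N / real s)"
  have finT: "finite T" unfolding T by simp
  have finFam: "finite (Fam k)" for k unfolding Fam_def
    by (rule finite_subset[of _ "Pow {N<..N^(k+1)}"]) auto
  have inj: "inj_on h X"
  proof (rule inj_onI)
    fix m1 m2 assume m1: "m1 \<in> X" and m2: "m2 \<in> X" and e: "h m1 = h m2"
    have "prime_factors m1 = (T - (T - prime_factors m1)) \<union> (prime_factors m1 - T)" by auto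
    also have "\<dots> = (T - (T - prime_factors m2)) \<union> (prime_factors m2 - T)" using e unfolding h_def by simp
    also have "\<dots> = prime_factors m2" by blast
    finally have "prime_factors m1 = prime_factors m2" .
    moreover have "m1 = \<Prod>(prime_factors m1)" using m1 unfolding X_def by (intro squarefree_prod_pf) auto
    moreover have "m2 = \<Prod>(prime_factors m2)" using m2 unfolding X_def by (intro squarefree_prod_pf) auto
    ultimately show "m1 = m2" by simp
  qed
  have sub: "h ` X \<subseteq> Sigma (Pow T) (\<lambda>A. Fam (card A - 1))"
  proof
    fix y assume "y \<in> h ` X"
    then obtain m where mX: "m \<in> X" and y: "y = h m" by auto
    define S where "S = prime_factors m"
    define A where "A = T - S"
    define U where "U = S - T"
    have m0: "0 < m" and sq: "squarefree m" and cS: "card S = d"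
      using mX unfolding X_def S_def by auto
    have "real m \<le> real (\<Prod>T)" using mX unfolding X_def by (simp del: of_nat_prod)
    hence mP: "m \<le> \<Prod>T" by (simp only: of_nat_le_iff)
    have finS: "finite S" unfolding S_def by simp
    have mS: "m = \<Prod>S" unfolding S_def using squarefree_prod_pf[OF m0 sq] .
    have Sprime: "\<And>p. p \<in> S \<Longrightarrow> prime p" unfolding S_def by auto
    have AT: "A \<subseteq> T" unfolding A_def by auto
    have UN: "U \<subseteq> {N<..}" unfolding U_def T using Sprime by auto
    have cA: "card A = Suc d - card (T \<inter> S)" unfolding A_def using cT finT
      by (simp add: card_Diff_subset_Int)
    have cU: "card U = d - card (S \<inter> T)" unfolding U_def using cS finS
      by (simp add: card_Diff_subset_Int)
    have "card (S \<inter> T) \<le> d" using cS finS by (metis card_mono inf_le1)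
    hence cAU: "card A = card U + 1" using cA cU by (simp add: Int_commute)
    have pos: "0 < \<Prod>(S \<inter> T)" using Sprime finS by (intro prod_pos) (auto dest: prime_gt_0_nat)
    have "\<Prod>(S \<inter> T) * \<Prod>U = \<Prod>S" unfolding U_def using prod.Int_Diff[OF finS, of id T] by simp
    also have "\<dots> \<le> \<Prod>T" using mS mP by simp
    also have "\<Prod>T = \<Prod>(S \<inter> T) * \<Prod>A" unfolding A_def using prod.Int_Diff[OF finT, of id S]
      by (simp add: Int_commute)
    finally have "\<Prod>U \<le> \<Prod>A" using pos by simp
    also have "\<Prod>A \<le> N ^ card A"
      using AT N unfolding T by (intro prod_le_power) auto
    finally have UA: "\<Prod>U \<le> N ^ (card U + 1)" using cAU by simp
    have finU: "finite U" unfolding U_def using finS by simp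
    have Ule: "U \<subseteq> {..N ^ (card U + 1)}"
    proof
      fix u assume u: "u \<in> U"
      have "0 < \<Prod>U" using finU UN by (intro prod_pos) auto
      moreover have "u dvd \<Prod>U" using dvd_prodI[OF finU u, of id] by simp
      ultimately have "u \<le> \<Prod>U" by (rule dvd_imp_le[rotated])
      thus "u \<in> {..N ^ (card U + 1)}" using UA by simp
    qed
    have "U \<in> Fam (card A - 1)" unfolding Fam_def using cAU UN Ule UA by auto
    thus "y \<in> Sigma (Pow T) (\<lambda>A. Fam (card A - 1))"
      unfolding y h_def using AT A_def U_def S_def by auto
  qed
  have "card X = card (h ` X)" using inj by (simp add: card_image)
  also have "\<dots> \<le> card (Sigma (Pow T) (\<lambda>A. Fam (card A - 1)))"
    using finT finFam by (intro card_mono sub) auto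
  also have "\<dots> = (\<Sum>A\<in>Pow T. card (Fam (card A - 1)))"
    using finT finFam by (intro card_SigmaI) auto
  finally have "real (card X) \<le> (\<Sum>A\<in>Pow T. real (card (Fam (card A - 1))))"
    by (simp flip: of_nat_sum)
  also have "\<dots> \<le> (\<Sum>A\<in>Pow T. B)"
    unfolding Fam_def B_def by (intro sum_mono F_bound N s)
  also have "\<dots> = 2 ^ Suc d * B" using finT cT by (simp add: card_Pow)
  finally show ?thesis unfolding X_def B_def .
qed

lemma ln2_gt_half: "1/2 < ln (2::real)"
proof -
  have "exp (1/2::real) ^ 2 = exp 1" by (simp flip: exp_of_nat_mult)
  also have "\<dots> \<le> 3" by (rule exp_le)
  finally have "exp (1/2::real) ^ 2 < 2 ^ 2" by simp
  hence "exp (1/2::real) < 2" by (rule power_less_imp_less_base) simp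
  hence "ln (exp (1/2::real)) < ln 2" by (subst ln_less_cancel_iff) auto
  thus ?thesis by simp
qed

lemma N_le_B:
  fixes N d :: nat assumes N: "2 \<le> N" and h: "2^(N-1) \<le> N^(d+2)"
  shows "real N \<le> (12 * (real d + 2)) powr (3/2)"
proof -
  define x where "x = real N"
  have x2: "2 \<le> x" unfolding x_def using N by simp
  have "real (2^(N-1)) \<le> real (N^(d+2))" using h by (simp only: of_nat_le_iff)
  hence "ln (real (2^(N-1))) \<le> ln (real (N^(d+2)))" using N by (subst ln_le_cancel_iff) auto
  moreover have "ln (real (2^(N-1))) = real (N-1) * ln 2" by (simp only: of_nat_power ln_realpow of_nat_numeral)
  moreover have "ln (real (N^(d+2))) = real (d+2) * ln x" unfolding x_def by (simp only: of_nat_power ln_realpow)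
  moreover have "real (N-1) = x - 1" unfolding x_def using N by (simp add: of_nat_diff)
  ultimately have h1: "(x - 1) * ln 2 \<le> (real d + 2) * ln x" by (simp add: add.commute)
  have "ln x = 3 * ln (x powr (1/3))" using x2 by (simp add: ln_powr)
  also have "ln (x powr (1/3)) \<le> x powr (1/3)"
    using ln_le_minus_one[of "x powr (1/3)"] x2 by simp
  finally have h2: "ln x \<le> 3 * x powr (1/3)" by simp
  have "x / 4 \<le> (x - 1) * ln 2"
  proof -
    have "x / 4 \<le> (x - 1) * (1/2)" using x2 by simp
    also have "\<dots> \<le> (x - 1) * ln 2" using x2 ln2_gt_half by (intro mult_left_mono) auto
    finally show ?thesis .
  qed
  also have "\<dots> \<le> (real d + 2) * ln x" by (rule h1)
  also have "\<dots> \<le> (real d + 2) * (3 * x powr (1/3))" using h2 by (intro mult_left_mono) auto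
  finally have h3: "x \<le> 12 * (real d + 2) * x powr (1/3)" by (simp add: algebra_simps)
  have "x = x powr (1/3) * x powr (2/3)" using x2 by (simp flip: powr_add)
  hence "x powr (1/3) * x powr (2/3) \<le> x powr (1/3) * (12 * (real d + 2))" using h3 by (simp add: mult_ac)
  hence h4: "x powr (2/3) \<le> 12 * (real d + 2)" using x2 by (subst (asm) mult_le_cancel_left_pos) auto
  have "x = (x powr (2/3)) powr (3/2)" using x2 by (simp add: powr_powr)
  also have "\<dots> \<le> (12 * (real d + 2)) powr (3/2)" using h4 by (intro powr_mono2) auto
  finally show ?thesis unfolding x_def .
qed

lemma N_pow:
  fixes d :: nat
  defines "N \<equiv> enumerate {p::nat. prime p} d"
  shows "2 \<le> N" "2^(N-1) \<le> N^(d+2)"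
proof -
  have inf: "infinite {p::nat. prime p}" by (rule primes_infinite)
  show N2: "2 \<le> N" unfolding N_def using enumerate_in_set[OF inf, of d] prime_ge_2_nat by auto
  define n where "n = N div 2"
  have n1: "1 \<le> n" unfolding n_def using N2 by simp
  have "card {p. prime p \<and> p \<le> 2*n} \<le> card {p. prime p \<and> p \<le> N}"
    unfolding n_def by (intro card_mono) auto
  also have "\<dots> = Suc d" unfolding N_def by (rule card_primes_le_enum)
  finally have c: "card {p. prime p \<and> p \<le> 2*n} + 1 \<le> d + 2" by simp
  have "2^(N-1) \<le> (2::nat)^(2*n)" unfolding n_def by (intro power_increasing) auto
  also have "\<dots> = 4^n" by (simp add: power_mult)
  also have "\<dots> \<le> (2*n) ^ (card {p. prime p \<and> p \<le> 2*n} + 1)" using n1 by (intro four_pow_le) simp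
  also have "\<dots> \<le> (2*n) ^ (d+2)" using n1 c by (intro power_increasing) auto
  also have "\<dots> \<le> N ^ (d+2)" unfolding n_def by (intro power_mono) auto
  finally show "2^(N-1) \<le> N^(d+2)" .
qed

lemma asym:
  "eventually (\<lambda>d::nat. 1 \<le> d \<and> (\<forall>N::nat. 2 \<le> N \<longrightarrow> 2^(N-1) \<le> N^(d+2) \<longrightarrow>
      real N ^ (N div d + 2) \<le> exp (real d))) sequentially"
proof -
  define B where "B = (\<lambda>y::real. (12*(y+2)) powr (3/2))"
  have "eventually (\<lambda>y::real. (B y / y + 2) * ln (B y) \<le> y) at_top"
    unfolding B_def by real_asymp
  hence "eventually (\<lambda>y::real. (B y / y + 2) * ln (B y) \<le> y \<and> 1 \<le> y) at_top"
    by (intro eventually_conj eventually_ge_at_top)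
  from eventually_compose_filterlim[OF this filterlim_real_sequentially]
  have ev: "eventually (\<lambda>d::nat. (B (real d) / real d + 2) * ln (B (real d)) \<le> real d \<and> 1 \<le> real d) sequentially" .
  show ?thesis
  proof (rule eventually_mono[OF ev], safe)
    fix d :: nat assume H: "(B (real d) / real d + 2) * ln (B (real d)) \<le> real d" and d1: "1 \<le> real d"
    show "1 \<le> d" using d1 by simp
    fix N :: nat assume N: "2 \<le> N" and h: "2^(N-1) \<le> N^(d+2)"
    define x where "x = real N"
    have x2: "2 \<le> x" unfolding x_def using N by simp
    have xB: "x \<le> B (real d)" unfolding x_def B_def using N_le_B[OF N h] .
    have lnx: "0 \<le> ln x" using x2 by simp
    have "real (N div d) * real d \<le> real N"
      by (simp only: of_nat_mult[symmetric] of_nat_le_iff) (use div_mult_mod_eq[of N d] in linarith)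
    hence k: "real (N div d) \<le> x / real d" unfolding x_def using d1 by (simp add: field_simps)
    have "real N ^ (N div d + 2) = exp (ln (x ^ (N div d + 2)))"
      using x2 unfolding x_def by (subst exp_ln) auto
    also have "ln (x ^ (N div d + 2)) = real (N div d + 2) * ln x" by (rule ln_realpow)
    also have "real (N div d + 2) * ln x \<le> (x / real d + 2) * ln x"
      using k lnx by (intro mult_right_mono) auto
    also have "\<dots> \<le> (B (real d) / real d + 2) * ln (B (real d))"
      using xB x2 d1 lnx by (intro mult_mono add_mono divide_right_mono) auto
    also have "\<dots> \<le> real d" by (rule H)
    finally show "real N ^ (N div d + 2) \<le> exp (real d)" by simp
  qed
qed

theorem lemma3p3:
  shows "\<exists>C::real. C > 0 \<and> (\<exists>K::real. \<forall>d::nat. d \<ge> 1 \<longrightarrow>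
           real (pi_d d (real (\<Prod>i=1..d+1. nth_prime i))) \<le> K * C ^ d)"
proof -
  obtain d0 where d0: "\<And>d. d0 \<le> d \<Longrightarrow> 1 \<le> d \<and> (\<forall>N::nat. 2 \<le> N \<longrightarrow> 2^(N-1) \<le> N^(d+2) \<longrightarrow>
      real N ^ (N div d + 2) \<le> exp (real d))"
    using asym unfolding eventually_sequentially by blast
  define C where "C = 2 * exp (2::real)"
  define f where "f = (\<lambda>d. real (pi_d d (real (\<Prod>i=1..d+1. nth_prime i))))"
  define K where "K = 2 + (\<Sum>d<d0. f d)"
  have f0: "\<And>d. 0 \<le> f d" by (simp add: f_def)
  have K0: "2 \<le> K" unfolding K_def using f0 by (simp add: sum_nonneg)
  have "1 \<le> exp (2::real)" by simp
  hence C1: "1 \<le> C" unfolding C_def by linarith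
  have main: "f d \<le> K * C ^ d" if d1: "1 \<le> d" for d
  proof (cases "d < d0")
    case True
    have "f d \<le> (\<Sum>d<d0. f d)" using True f0 by (intro member_le_sum) auto
    also have "\<dots> \<le> K" unfolding K_def by simp
    also have "K \<le> K * C ^ d" using K0 C1 by (simp add: one_le_power)
    finally show ?thesis .
  next
    case False
    hence hd: "\<forall>N::nat. 2 \<le> N \<longrightarrow> 2^(N-1) \<le> N^(d+2) \<longrightarrow> real N ^ (N div d + 2) \<le> exp (real d)"
      using d0[of d] by simp
    define N where "N = enumerate {p::nat. prime p} d"
    define T where "T = {p. prime p \<and> p \<le> N}"
    define s where "s = N div d + 1"
    have N2: "2 \<le> N" and Np: "2^(N-1) \<le> N^(d+2)" unfolding N_def by (rule N_pow)+
    have cT: "card T = Suc d" unfolding T_def N_def by (rule card_primes_le_enum)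
    have P: "(\<Prod>i=1..d+1. nth_prime i) = \<Prod>T"
      unfolding nth_prime_def T_def N_def by (rule prod_primes_le_enum)
    have s1: "1 \<le> s" unfolding s_def by simp
    have "f d = real (card {m::nat. 0 < m \<and> real m \<le> real (\<Prod>T) \<and> squarefree m \<and> card (prime_factors m) = d})"
      unfolding f_def pi_d_def P ..
    also have "\<dots> \<le> 2 ^ Suc d * (real N ^ Suc s * exp (real N / real s))"
      by (rule main_count[OF T_def cT N2 s1])
    also have "real N ^ Suc s \<le> exp (real d)" unfolding s_def using hd N2 Np by simp
    also have "exp (real N / real s) \<le> exp (real d)"
    proof -
      have "real N < real d * real s"
      proof -
        have m1: "d * (N div d) + N mod d = N" by (rule mult_div_mod_eq)
        have m2: "N mod d < d" using d1 by simp
        have "N < d * s" unfolding s_def distrib_left mult_1_right using m1 m2 by linarith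
        thus ?thesis by (simp only: of_nat_mult[symmetric] of_nat_less_iff)
      qed
      hence "real N / real s \<le> real d" using s1 by (simp add: field_simps)
      thus ?thesis by simp
    qed
    also have "2 ^ Suc d * (exp (real d) * exp (real d)) = 2 * C ^ d"
    proof -
      have "exp (real d) * exp (real d) = exp 2 ^ d"
        by (simp flip: exp_add exp_of_nat_mult add: algebra_simps)
      thus ?thesis unfolding C_def by (simp add: power_mult_distrib)
    qed
    also have "\<dots> \<le> K * C ^ d" using K0 C1 by (intro mult_right_mono) auto
    finally show ?thesis by (simp add: mult_left_mono)
  qed
  show ?thesis
    using main C1 unfolding f_def by (intro exI[of _ C] conjI exI[of _ K]) auto
qed

end
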